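(* Let $G$ be a 3-regular graph on $n$ vertices and $k$ a positive integer. For every $\delta$ with $\frac{2\log2}{k}\le\delta<n$, let $\eta=\frac{n}{\sqrt{n+\delta}}$. If $x\in\mathbb{R}^n$ satisfies $\|x\|_2=1$ and $\|x\|_1\le\eta$, then $p_G(x)\le\mathrm{MaxCut}(G)\le\mathrm{Opt}(G)$. Consequently, with $\mathcal{T}_\delta=\{x\in\mathbb{R}^n:\|x\|_2=1,\ \|x\|_1\ge\eta\}$, one has $\mathrm{Opt}(G)=\max_{x\in\mathcal{T}_\delta}p_G(x)$.
   Context: Let $A$ be the adjacency matrix of $G$ and $Q_G=\frac12\big(I-\frac13A\big)$. Define $\mathrm{MaxCut}(G)=\max_{x\in\{\pm1/\sqrt n\}^n}x^TQ_Gx$, $p_G(x)=(x^TQ_Gx)\prod_{i=1}^n(nx_i^2)^k$ for $x\in\mathbb{R}^n$, and $\mathrm{Opt}(G)=\max_{\|x\|_2=1}p_G(x)$. *)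

theory Defs
  imports "HOL-Analysis.Analysis"
begin

text \<open>A finite simple graph on the vertex type 'n (n = CARD('n)) is given by a
symmetric irreflexive edge relation E.\<close>

definition simple_graph :: "('n \<Rightarrow> 'n \<Rightarrow> bool) \<Rightarrow> bool" where
  "simple_graph E \<longleftrightarrow> (\<forall>i j. E i j \<longleftrightarrow> E j i) \<and> (\<forall>i. \<not> E i i)"

definition regular_graph :: "nat \<Rightarrow> ('n::finite \<Rightarrow> 'n \<Rightarrow> bool) \<Rightarrow> bool" where
  "regular_graph d E \<longleftrightarrow> simple_graph E \<and> (\<forall>i. card {j. E i j} = d)"

definition adj_matrix :: "('n::finite \<Rightarrow> 'n \<Rightarrow> bool) \<Rightarrow> real^'n^'n" where
  "adj_matrix E = (\<chi> i j. if E i j then 1 else 0)"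

definition QG :: "('n::finite \<Rightarrow> 'n \<Rightarrow> bool) \<Rightarrow> real^'n^'n" where
  "QG E = (1/2) *\<^sub>R (mat 1 - (1/3) *\<^sub>R adj_matrix E)"

definition quad_form :: "real^'n^'n \<Rightarrow> real^'n \<Rightarrow> real" where
  "quad_form Q x = x \<bullet> (Q *v x)"

definition MaxCut :: "('n::finite \<Rightarrow> 'n \<Rightarrow> bool) \<Rightarrow> real" where
  "MaxCut E = Max ((\<lambda>x. quad_form (QG E) x) `
      {x :: real^'n. \<forall>i. x $ i = 1 / sqrt (CARD('n)) \<or> x $ i = - 1 / sqrt (CARD('n))})"

definition pG :: "('n::finite \<Rightarrow> 'n \<Rightarrow> bool) \<Rightarrow> nat \<Rightarrow> real^'n \<Rightarrow> real" where
  "pG E k x = quad_form (QG E) x * (\<Prod>i\<in>UNIV. (real CARD('n) * (x $ i)^2) ^ k)"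

definition Opt :: "('n::finite \<Rightarrow> 'n \<Rightarrow> bool) \<Rightarrow> nat \<Rightarrow> real" where
  "Opt E k = (SUP x \<in> {x :: real^'n. norm x = 1}. pG E k x)"

definition l1norm :: "real^'n::finite \<Rightarrow> real" where
  "l1norm x = (\<Sum>i\<in>UNIV. \<bar>x $ i\<bar>)"

end

theory Submission
  imports Defs
begin

definition SS :: "('n::finite \<Rightarrow> 'n \<Rightarrow> bool) \<Rightarrow> real^'n \<Rightarrow> real" where
  "SS E x = (\<Sum>i\<in>UNIV. \<Sum>j\<in>UNIV. if E i j then x$i * x$j else 0)"

lemma quad_eq: "quad_form (QG E) x = (x \<bullet> x)/2 - SS E x / 6"
proof -
  have "(QG E *v x) $ i = (x$i)/2 - (\<Sum>j\<in>UNIV. if E i j then x$j else 0)/6" for i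
  proof -
    have "(QG E *v x) $ i = (\<Sum>j\<in>UNIV. (1/2) * ((if i = j then 1 else 0) - (1/3) * (if E i j then 1 else 0)) * x$j)"
      by (simp add: QG_def matrix_vector_mult_def adj_matrix_def mat_def)
    also have "\<dots> = (\<Sum>j\<in>UNIV. (if i = j then x$j/2 else 0) - (if E i j then x$j else 0)/6)"
      by (rule sum.cong) auto
    also have "\<dots> = (x$i)/2 - (\<Sum>j\<in>UNIV. if E i j then x$j else 0)/6"
      by (simp add: sum_subtractf sum_distrib_left[symmetric] sum_divide_distrib)
    finally show ?thesis .
  qed
  then have "quad_form (QG E) x = (\<Sum>i\<in>UNIV. x$i * ((x$i)/2 - (\<Sum>j\<in>UNIV. if E i j then x$j else 0)/6))"
    by (simp add: quad_form_def inner_vec_def)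
  also have "\<dots> = (\<Sum>i\<in>UNIV. (x$i * x$i)/2 - (\<Sum>j\<in>UNIV. if E i j then x$i * x$j else 0)/6)"
    by (rule sum.cong) (auto simp: algebra_simps sum_distrib_left sum_divide_distrib intro!: sum.cong)
  also have "\<dots> = (x \<bullet> x)/2 - SS E x / 6"
    by (simp add: SS_def inner_vec_def sum_subtractf sum_divide_distrib)
  finally show ?thesis .
qed

lemma vec_nth_cont[continuous_intros]: "continuous_on s (\<lambda>x::real^'n. x $ i)"
  by (intro linear_continuous_on bounded_linear_vec_nth)

lemma pG_cont: "continuous_on s (pG E k)"
proof -
  have "pG E k = (\<lambda>x. ((x \<bullet> x)/2 - (\<Sum>i\<in>UNIV. \<Sum>j\<in>UNIV. (if E i j then 1 else 0) * (x$i * x$j)) / 6) * (\<Prod>i\<in>UNIV. (real CARD('a) * (x $ i)^2) ^ k))"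
  proof
    fix x :: "real^'a"
    have "SS E x = (\<Sum>i\<in>UNIV. \<Sum>j\<in>UNIV. (if E i j then 1 else 0) * (x$i * x$j))"
      unfolding SS_def by (intro sum.cong) auto
    then show "pG E k x = ((x \<bullet> x)/2 - (\<Sum>i\<in>UNIV. \<Sum>j\<in>UNIV. (if E i j then 1 else 0) * (x$i * x$j)) / 6) * (\<Prod>i\<in>UNIV. (real CARD('a) * (x $ i)^2) ^ k)"
      by (simp add: pG_def quad_eq)
  qed
  moreover have "continuous_on s \<dots>"
    by (intro continuous_intros) auto
  ultimately show ?thesis by simp
qed


lemma sum_if_const: "(\<Sum>j\<in>UNIV. if (P::'a::finite\<Rightarrow>bool) j then (c::real) else 0) = c * card {j. P j}"
proof -
  have "(\<Sum>j\<in>UNIV. if P j then (c::real) else 0) = (\<Sum>j\<in>{j\<in>UNIV. P j}. c)"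
    by (rule sum.inter_filter[symmetric]) simp
  then show ?thesis by simp
qed

lemma SS_lower:
  assumes "regular_graph 3 E"
  shows "SS E x \<ge> - 3 * (x \<bullet> x)"
proof -
  have E: "E a b = E b a" "card {j. E a j} = 3" for a b
    using assms unfolding regular_graph_def simple_graph_def by blast+
  have c2: "card {j. E j a} = 3" for a
  proof -
    have "{j. E j a} = {j. E a j}" using E(1) by auto
    then show ?thesis using E(2)[of a] by simp
  qed
  have A: "(\<Sum>i\<in>UNIV. \<Sum>j\<in>UNIV. - ((if E i j then (x$i)^2 else 0) + (if E i j then (x$j)^2 else 0))/2) \<le> SS E x"
    unfolding SS_def
  proof (intro sum_mono)
    fix i j
    have "x$i * x$j \<ge> - ((x$i)^2 + (x$j)^2)/2"
    proof -
      have "0 \<le> (x$i)^2 + (x$j)^2 + 2 * (x$i * x$j)"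
        using zero_le_power2[of "x$i + x$j"] unfolding power2_sum by (simp add: mult.assoc)
      then show ?thesis by (simp add: field_simps)
    qed
    then show "- ((if E i j then (x$i)^2 else 0) + (if E i j then (x$j)^2 else 0))/2 \<le> (if E i j then x$i * x$j else 0)"
      by auto
  qed
  have B: "(\<Sum>i\<in>UNIV. \<Sum>j\<in>UNIV. - ((if E i j then (x$i)^2 else 0) + (if E i j then (x$j)^2 else 0))/2) = (-1/2) * (\<Sum>i\<in>UNIV. \<Sum>j\<in>UNIV. if E i j then (x$i)^2 else 0) + (-1/2) * (\<Sum>i\<in>UNIV. \<Sum>j\<in>UNIV. if E i j then (x$j)^2 else 0)"
  proof -
    have "(\<Sum>i\<in>UNIV. \<Sum>j\<in>UNIV. - ((if E i j then (x$i)^2 else 0) + (if E i j then (x$j)^2 else 0))/2) = (\<Sum>i\<in>UNIV. \<Sum>j\<in>UNIV. (-1/2) * (if E i j then (x$i)^2 else 0) + (-1/2) * (if E i j then (x$j)^2 else 0))"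
      by (intro sum.cong refl) (simp add: field_simps)
    then show ?thesis by (simp only: sum.distrib sum_distrib_left)
  qed
  have C: "(\<Sum>i\<in>UNIV. \<Sum>j\<in>UNIV. if E i j then (x$i)^2 else 0) = (\<Sum>i\<in>UNIV. (x$i)^2 * 3)"
    using sum_if_const[of "E _"] E(2) by simp
  have "(\<Sum>i\<in>UNIV. \<Sum>j\<in>UNIV. if E i j then (x$j)^2 else 0) = (\<Sum>j\<in>UNIV. \<Sum>i\<in>UNIV. if E i j then (x$j)^2 else 0)"
    by (rule sum.swap)
  also have "\<dots> = (\<Sum>j\<in>UNIV. (x$j)^2 * 3)"
    using sum_if_const[of "\<lambda>i. E i _"] c2 by simp
  finally have D: "(\<Sum>i\<in>UNIV. \<Sum>j\<in>UNIV. if E i j then (x$j)^2 else 0) = (\<Sum>j\<in>UNIV. (x$j)^2 * 3)" .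
  have "x \<bullet> x = (\<Sum>j\<in>UNIV. (x$j)^2)"
    by (simp add: inner_vec_def power2_eq_square)
  then show ?thesis using A B C D
    by (simp add: sum_distrib_right[symmetric])
qed

lemma quad_le:
  assumes "regular_graph 3 E"
  shows "quad_form (QG E) x \<le> x \<bullet> x"
  using SS_lower[OF assms, of x] inner_ge_zero[of x] by (simp add: quad_eq)

definition flip :: "'n::finite \<Rightarrow> real^'n \<Rightarrow> real^'n" where
  "flip i x = (\<chi> j. if j = i then - x$j else x$j)"

lemma SS_flip:
  assumes sg: "simple_graph E"
  shows "SS E (flip i x) = SS E x - 4 * x$i * (\<Sum>j\<in>UNIV. if E i j then x$j else 0)"
proof -
  have E: "E a b = E b a" "\<not>E a a" for a b using sg by (auto simp: simple_graph_def)
  have "SS E (flip i x) = (\<Sum>a\<in>UNIV. \<Sum>b\<in>UNIV. (if E a b then x$a*x$b else 0)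
     - 2*(if a = i then (if E i b then x$i * x$b else 0) else 0) - 2*(if b = i then (if E a i then x$a*x$i else 0) else 0))"
    unfolding SS_def flip_def by (intro sum.cong refl) (auto simp: E)
  also have "\<dots> = SS E x - 2 * (\<Sum>b\<in>UNIV. if E i b then x$i * x$b else 0) - 2 * (\<Sum>a\<in>UNIV. if E a i then x$a*x$i else 0)"
  proof -
    have 1: "(\<Sum>a\<in>UNIV. \<Sum>b\<in>UNIV. (if a = i then (if E i b then x$i * x$b else 0) else 0)) = (\<Sum>b\<in>UNIV. if E i b then x$i * x$b else 0)"
      by (subst sum.swap) (simp add: sum.delta)
    have 2: "(\<Sum>a\<in>UNIV. \<Sum>b\<in>UNIV. (if b = i then (if E a i then x$a * x$i else 0) else 0)) = (\<Sum>a\<in>UNIV. if E a i then x$a*x$i else 0)"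
      by (simp add: sum.delta)
    show ?thesis
      by (simp add: sum_subtractf SS_def sum_distrib_left[symmetric] 1 2)
  qed
  also have "(\<Sum>a\<in>UNIV. if E a i then x$a*x$i else 0) = x$i * (\<Sum>j\<in>UNIV. if E i j then x$j else 0)"
    by (simp add: sum_distrib_left E(1)[of _ i] if_distrib mult.commute cong: if_cong)
  also have "(\<Sum>b\<in>UNIV. if E i b then x$i * x$b else 0) = x$i * (\<Sum>j\<in>UNIV. if E i j then x$j else 0)"
    by (simp add: sum_distrib_left if_distrib cong: if_cong)
  finally show ?thesis by simp
qed

definition Sg :: "(real^'n::finite) set" where
  "Sg = {x :: real^'n. \<forall>i. x $ i = 1 / sqrt (CARD('n)) \<or> x $ i = - 1 / sqrt (CARD('n))}"

lemma MaxCut_Sg: "MaxCut E = Max ((\<lambda>x. quad_form (QG E) x) ` Sg)"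
  unfolding MaxCut_def Sg_def ..

lemma Sg_finite: "finite (Sg :: (real^'n::finite) set)"
proof -
  let ?a = "1 / sqrt (CARD('n))" and ?b = "- 1 / sqrt (CARD('n))"
  have "Sg \<subseteq> vec_lambda ` (Pi UNIV (\<lambda>_::'n. {?a, ?b}))"
  proof
    fix x :: "real^'n" assume "x \<in> Sg"
    then have "vec_nth x \<in> Pi UNIV (\<lambda>_. {?a, ?b})" by (auto simp: Sg_def)
    then show "x \<in> vec_lambda ` (Pi UNIV (\<lambda>_::'n. {?a, ?b}))"
      by (metis image_eqI vec_nth_inverse)
  qed
  moreover have "finite (Pi UNIV (\<lambda>_::'n. {?a, ?b}))"
    using finite_PiE[of UNIV "\<lambda>_::'n. {?a, ?b}"] by (simp add: PiE_UNIV_domain)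
  ultimately show ?thesis by (meson finite_imageI finite_subset)
qed

lemma Sg_ne: "(\<chi> i. 1 / sqrt (CARD('n))) \<in> (Sg :: (real^'n::finite) set)"
  by (simp add: Sg_def)

lemma Sg_cases: "x \<in> Sg \<Longrightarrow> x $ i = 1 / sqrt (real CARD('n::finite)) \<or> x $ i = - (1 / sqrt (real CARD('n)))" for x :: "real^'n"
  by (simp add: Sg_def)

lemma Sg_sq: "x \<in> Sg \<Longrightarrow> (x $ i)^2 = 1 / real CARD('n::finite)" for x :: "real^'n"
proof -
  assume "x \<in> Sg"
  then have "(x $ i)^2 = (1 / sqrt (real CARD('n)))^2"
    using Sg_cases[of x i] by auto
  also have "\<dots> = 1 / real CARD('n)" by (simp add: power_divide)
  finally show ?thesis .
qed

lemma Sg_abs: "x \<in> Sg \<Longrightarrow> \<bar>x $ i\<bar> = 1 / sqrt (real CARD('n::finite))" for x :: "real^'n"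
  using Sg_cases[of x i] by auto

lemma Sg_inner: "x \<in> Sg \<Longrightarrow> x \<bullet> x = 1" for x :: "real^'n::finite"
proof -
  assume xs: "x \<in> Sg"
  have "x \<bullet> x = (\<Sum>i::'n\<in>UNIV. 1 / real CARD('n))"
    unfolding inner_vec_def inner_real_def by (rule sum.cong[OF refl]) (metis Sg_sq[OF xs] power2_eq_square)
  then show ?thesis by simp
qed

lemma Sg_norm: "x \<in> Sg \<Longrightarrow> norm x = 1" for x :: "real^'n::finite"
  by (simp add: norm_eq_sqrt_inner Sg_inner)

lemma Sg_l1: "x \<in> Sg \<Longrightarrow> l1norm x = sqrt (real CARD('n))" for x :: "real^'n::finite"
proof -
  assume "x \<in> Sg"
  then have "l1norm x = real CARD('n) * (1 / sqrt (real CARD('n)))"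
    unfolding l1norm_def by (simp add: Sg_abs)
  also have "\<dots> = sqrt (real CARD('n))"
    using real_div_sqrt[of "real CARD('n)"] by simp
  finally show ?thesis .
qed

lemma Sg_pG: "x \<in> Sg \<Longrightarrow> pG E k x = quad_form (QG E) x" for x :: "real^'n::finite"
  by (simp add: pG_def Sg_sq)

lemma flip_Sg: "x \<in> Sg \<Longrightarrow> flip i x \<in> Sg"
  by (auto simp: Sg_def flip_def)

lemma MaxCut_ge:
  assumes "simple_graph E"
  shows "MaxCut E \<ge> 1/2"
proof -
  let ?A = "(\<lambda>x. quad_form (QG E) x) ` Sg"
  have fin: "finite ?A" and ne: "?A \<noteq> {}" using Sg_finite Sg_ne by auto
  obtain s where s: "s \<in> Sg" "MaxCut E = quad_form (QG E) s"
    using Max_in[OF fin ne] unfolding MaxCut_Sg by auto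
  define T where "T i = (\<Sum>j\<in>UNIV. if E i j then s$j else 0)" for i
  have loc: "s$i * T i \<le> 0" for i
  proof -
    have "quad_form (QG E) (flip i s) \<le> MaxCut E"
      unfolding MaxCut_Sg using fin flip_Sg[OF s(1)] by auto
    then have "(flip i s \<bullet> flip i s)/2 - SS E (flip i s) / 6 \<le> (s \<bullet> s)/2 - SS E s / 6"
      using s by (simp only: quad_eq)
    then have "1/2 - SS E (flip i s) / 6 \<le> 1/2 - SS E s / 6"
      by (simp only: Sg_inner[OF s(1)] Sg_inner[OF flip_Sg[OF s(1)]])
    then show ?thesis using SS_flip[OF assms, of i s] unfolding T_def by simp
  qed
  have "SS E s = (\<Sum>i\<in>UNIV. s$i * T i)"
    unfolding SS_def T_def sum_distrib_left by (intro sum.cong refl) auto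
  also have "\<dots> \<le> 0" using loc by (simp add: sum_nonpos)
  finally show ?thesis using s by (simp add: quad_eq Sg_inner[OF s(1)])
qed


lemma ln2_ge: "ln 2 \<ge> (1/2::real)"
proof -
  have "exp (1/2::real) ^ 2 = exp 1"
    by (simp add: exp_of_nat_mult[symmetric])
  also have "\<dots> \<le> 3" by (rule exp_le)
  finally have "exp (1/2::real) ^ 2 < 2 ^ 2" by simp
  then have "exp (1/2::real) < 2"
    by (rule power_less_imp_less_base) simp
  then show ?thesis
    by (metis exp_gt_zero less_eq_real_def ln_exp ln_less_cancel_iff zero_less_numeral)
qed

lemma amgm_abs:
  fixes x :: "real^'n::finite"
  shows "(\<Prod>i\<in>UNIV. \<bar>x$i\<bar>) \<le> (l1norm x / real CARD('n)) ^ CARD('n)"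
proof -
  let ?N = "real CARD('n)"
  let ?P = "\<Prod>i\<in>UNIV. \<bar>x$i\<bar>"
  have P0: "?P \<ge> 0" by (simp add: prod_nonneg)
  have am: "(\<Sum>i\<in>UNIV. \<bar>x$i\<bar> / card (UNIV::'n set)) \<ge> ?P powr (1 / card (UNIV::'n set))"
    by (rule arith_geom_mean) auto
  then have am2: "?P powr (1 / ?N) \<le> l1norm x / ?N"
    by (simp add: l1norm_def sum_divide_distrib)
  show ?thesis
  proof (cases "?P = 0")
    case True
    have "l1norm x \<ge> 0" by (simp add: l1norm_def sum_nonneg)
    then have "0 \<le> (l1norm x / ?N) ^ CARD('n)" by simp
    then show ?thesis using True by linarith
  next
    case False
    then have Ppos: "?P > 0" using P0 by linarith
    have "?P = (?P powr (1 / ?N)) ^ CARD('n)"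
    proof -
      have "(?P powr (1 / ?N)) ^ CARD('n) = (?P powr (1 / ?N)) powr ?N"
        by (rule powr_realpow[symmetric]) (metis Ppos powr_gt_zero less_irrefl)
      also have "\<dots> = ?P powr (1 / ?N * ?N)"
        by (simp add: powr_powr)
      also have "\<dots> = ?P" using P0 by simp
      finally show ?thesis by simp
    qed
    also have "\<dots> \<le> (l1norm x / ?N) ^ CARD('n)"
      by (rule power_mono[OF am2]) simp
    finally show ?thesis .
  qed
qed

lemma prod_bound:
  fixes x :: "real^'n::finite" and \<delta> :: real and k :: nat
  assumes nx: "norm x = 1" and l1: "l1norm x \<le> real CARD('n) / sqrt (real CARD('n) + \<delta>)"
    and d: "\<delta> > 0" and kd: "2 * ln 2 / real k \<le> \<delta>" and k: "k > 0"
  shows "(\<Prod>i\<in>UNIV. (real CARD('n) * (x $ i)^2) ^ k) \<le> 1/2"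
proof -
  let ?N = "real CARD('n)"
  let ?C = "CARD('n)"
  have N: "?N > 0" by simp
  define Q where "Q = (\<Prod>i\<in>UNIV. ?N * (x $ i)^2)"
  have Q0: "Q \<ge> 0" unfolding Q_def by (simp add: prod_nonneg)
  have l10: "l1norm x \<ge> 0" by (simp add: l1norm_def sum_nonneg)
  have "Q = ?N ^ ?C * (\<Prod>i\<in>UNIV. \<bar>x$i\<bar>) ^ 2"
  proof -
    have "(\<Prod>i\<in>UNIV. \<bar>x$i\<bar>) ^ 2 = (\<Prod>i\<in>UNIV. x$i) ^ 2"
      by (metis abs_prod power2_abs)
    then show ?thesis unfolding Q_def by (simp add: prod.distrib prod_power_distrib[symmetric])
  qed
  also have "\<dots> \<le> ?N ^ ?C * ((l1norm x / ?N) ^ ?C) ^ 2"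
    by (intro mult_left_mono power_mono amgm_abs) (auto simp: prod_nonneg)
  also have "\<dots> = ((l1norm x)^2 / ?N) ^ ?C"
  proof -
    have "?N ^ ?C * ((l1norm x / ?N) ^ ?C) ^ 2 = (?N * (l1norm x / ?N)^2) ^ ?C"
      by (metis power_mult mult.commute power_mult_distrib)
    also have "?N * (l1norm x / ?N)^2 = (l1norm x)^2 / ?N"
      using N by (simp add: power2_eq_square field_simps)
    finally show ?thesis .
  qed
  also have "\<dots> \<le> ((?N / sqrt (?N + \<delta>))^2 / ?N) ^ ?C"
    by (intro power_mono divide_right_mono power_mono l1 l10) auto
  also have "(?N / sqrt (?N + \<delta>))^2 / ?N = 1 / (1 + \<delta> / ?N)"
  proof -
    have sq: "(sqrt (?N + \<delta>))^2 = ?N + \<delta>" using d by simp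
    have "(?N / sqrt (?N + \<delta>))^2 / ?N = ?N^2 / (?N + \<delta>) / ?N"
      by (simp add: power_divide sq)
    also have "\<dots> = ?N / (?N + \<delta>)"
      using N by (simp add: power2_eq_square)
    also have "\<dots> = 1 / (1 + \<delta> / ?N)"
      using N d by (simp add: field_simps)
    finally show ?thesis .
  qed
  also have "(1 / (1 + \<delta> / ?N)) ^ ?C = 1 / (1 + \<delta> / ?N) ^ ?C"
    by (simp add: power_divide)
  also have "\<dots> \<le> 1 / (1 + \<delta>)"
  proof -
    have "1 + real ?C * (\<delta> / ?N) \<le> (1 + \<delta> / ?N) ^ ?C"
      by (rule Bernoulli_inequality) (use N d in \<open>simp add: field_simps\<close>)
    then have "1 + \<delta> \<le> (1 + \<delta> / ?N) ^ ?C" using N by simp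
    then show ?thesis using d by (intro divide_left_mono) auto
  qed
  finally have Qb: "Q \<le> 1 / (1 + \<delta>)" .
  have "(\<Prod>i\<in>UNIV. (?N * (x $ i)^2) ^ k) = Q ^ k"
    unfolding Q_def by (simp add: prod_power_distrib)
  also have "\<dots> \<le> (1 / (1 + \<delta>)) ^ k"
    by (rule power_mono[OF Qb Q0])
  also have "\<dots> = 1 / (1 + \<delta>) ^ k" by (simp add: power_divide)
  also have "\<dots> \<le> 1 / (1 + real k * \<delta>)"
  proof -
    have "1 + real k * \<delta> \<le> (1 + \<delta>) ^ k"
      by (rule Bernoulli_inequality) (use d in simp)
    moreover have "0 < 1 + real k * \<delta>" using d by (simp add: add_pos_nonneg)
    moreover have "0 < (1 + \<delta>) ^ k" using d by simp
    ultimately show ?thesis by (intro divide_left_mono mult_pos_pos) auto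
  qed
  also have "\<dots> \<le> 1/2"
  proof -
    have "real k * \<delta> \<ge> 2 * ln 2" using kd k by (simp add: field_simps)
    then have "real k * \<delta> \<ge> 1" using ln2_ge by linarith
    then show ?thesis by (simp add: field_simps)
  qed
  finally show ?thesis .
qed

theorem mainTheorem18:
  fixes E :: "'n::finite \<Rightarrow> 'n \<Rightarrow> bool" and k :: nat and \<delta> :: real
  assumes "regular_graph 3 E"
    and "k > 0"
    and "2 * ln 2 / real k \<le> \<delta>" and "\<delta> < real CARD('n)"
  defines "\<eta> \<equiv> real CARD('n) / sqrt (real CARD('n) + \<delta>)"
  shows "(\<forall>x :: real^'n. norm x = 1 \<and> l1norm x \<le> \<eta> \<longrightarrow>
            pG E k x \<le> MaxCut E \<and> MaxCut E \<le> Opt E k)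
     \<and> (\<exists>x\<in>{x :: real^'n. norm x = 1 \<and> l1norm x \<ge> \<eta>}. pG E k x = Opt E k
           \<and> (\<forall>y\<in>{x :: real^'n. norm x = 1 \<and> l1norm x \<ge> \<eta>}. pG E k y \<le> pG E k x))"
proof -
  let ?N = "real CARD('n)"
  let ?S = "{x :: real^'n. norm x = 1}"
  have reg: "regular_graph 3 E" by fact
  have sg: "simple_graph E" using reg by (simp add: regular_graph_def)
  have N: "?N > 0" by simp
  have d: "\<delta> > 0"
  proof -
    have "2 * ln 2 / real k > 0" using assms(2) by simp
    then show ?thesis using assms(3) by linarith
  qed
  have eta_le: "\<eta> \<le> sqrt ?N"
  proof -
    have h1: "sqrt ?N \<le> sqrt (?N + \<delta>)" using d by simp
    have h2: "0 < sqrt (?N + \<delta>) * sqrt ?N"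
      using N d by (intro mult_pos_pos) (simp_all add: add_pos_pos)
    have "\<eta> \<le> ?N / sqrt ?N" unfolding \<eta>_def
      by (rule divide_left_mono[OF h1 _ h2]) simp
    also have "\<dots> = sqrt ?N" using real_div_sqrt[of ?N] by simp
    finally show ?thesis .
  qed
  have Sc: "compact ?S"
  proof -
    have "?S = sphere 0 1" by auto
    then show ?thesis using compact_sphere by metis
  qed
  have Sne: "?S \<noteq> {}" using Sg_norm[OF Sg_ne] by blast
  obtain x0 where x0: "x0 \<in> ?S" "\<And>y. y \<in> ?S \<Longrightarrow> pG E k y \<le> pG E k x0"
    using continuous_attains_sup[OF Sc Sne pG_cont[of ?S E k]] by blast
  have Opt: "Opt E k = pG E k x0"
    unfolding Opt_def by (rule cSup_eq_maximum) (use x0 in auto)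
  let ?A = "(\<lambda>x. quad_form (QG E) x) ` Sg"
  have fin: "finite ?A" and ne: "?A \<noteq> {}" using Sg_finite Sg_ne by auto
  obtain s where s: "s \<in> Sg" "MaxCut E = quad_form (QG E) s"
    using Max_in[OF fin ne] unfolding MaxCut_Sg by auto
  have ps: "pG E k s = MaxCut E" using s Sg_pG by metis
  have MO: "MaxCut E \<le> Opt E k"
    using x0(2)[of s] Sg_norm[OF s(1)] ps Opt by auto
  have part1: "pG E k x \<le> MaxCut E" if x: "norm x = 1" "l1norm x \<le> \<eta>" for x :: "real^'n"
  proof -
    let ?p = "(\<Prod>i\<in>UNIV. (?N * (x $ i)^2) ^ k)"
    have p0: "?p \<ge> 0" by (simp add: prod_nonneg)
    have p2: "?p \<le> 1/2"
      using prod_bound[OF x(1) x(2)[unfolded \<eta>_def] d assms(3) assms(2)] .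
    have "x \<bullet> x = 1" using x(1) by (simp add: power2_norm_eq_inner[symmetric])
    then have q: "quad_form (QG E) x \<le> 1" using quad_le[OF reg, of x] by simp
    have "pG E k x = quad_form (QG E) x * ?p" by (simp add: pG_def)
    also have "\<dots> \<le> 1 * ?p" by (rule mult_right_mono[OF q p0])
    also have "\<dots> \<le> MaxCut E" using p2 MaxCut_ge[OF sg] by simp
    finally show ?thesis .
  qed
  show ?thesis
  proof (intro conjI allI impI)
    fix x :: "real^'n" assume "norm x = 1 \<and> l1norm x \<le> \<eta>"
    then show "pG E k x \<le> MaxCut E" using part1 by blast
  next
    show "MaxCut E \<le> Opt E k" by (rule MO)
  next
    show "\<exists>x\<in>{x :: real^'n. norm x = 1 \<and> l1norm x \<ge> \<eta>}. pG E k x = Opt E k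
           \<and> (\<forall>y\<in>{x :: real^'n. norm x = 1 \<and> l1norm x \<ge> \<eta>}. pG E k y \<le> pG E k x)"
    proof (cases "l1norm x0 \<ge> \<eta>")
      case True
      then show ?thesis using x0 Opt by auto
    next
      case False
      then have "pG E k x0 \<le> MaxCut E" using part1[of x0] x0(1) by auto
      then have eq: "pG E k s = Opt E k" using ps MO Opt by auto
      have "s \<in> {x :: real^'n. norm x = 1 \<and> l1norm x \<ge> \<eta>}"
        using Sg_norm[OF s(1)] Sg_l1[OF s(1)] eta_le by auto
      then show ?thesis using eq x0(2) Opt by (intro bexI[of _ s]) auto
    qed
  qed
qed
end
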